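(* Let $\alpha_2,\alpha_3\le0$ and $\alpha_1\le\alpha_2^2/4$ be real. Let $\mathbf{x}=(x_s)\in(\mathbb{R}_{>0})^{\mathbb{Z}}$ satisfy, for all $v\in\mathbb{Z}$ (with $z_i=x_{v+i}$), $$z_0^2z_3^2+\alpha_1z_1^2z_2^2+\alpha_2z_0z_1z_2z_3+\alpha_3(z_0z_2^3+z_1^3z_3)=0,$$ and assume moreover that $z_3$ is the larger of the two real solutions of this equation, i.e. $z_3=\dfrac{-\alpha_3z_1^3-\alpha_2z_0z_1z_2+\sqrt D}{2z_0^2}$ with $D=\alpha_3^2z_1^6+2\alpha_2\alpha_3z_0z_1^4z_2+(\alpha_2^2-4\alpha_1)z_0^2z_1^2z_2^2-4\alpha_3z_0^3z_2^3$. Then for all $v\in\mathbb{Z}$, $$2z_0^2z_3+\alpha_2z_0z_1z_2+\alpha_3z_1^3=2z_{-1}z_2^2+\alpha_2z_0z_1z_2+\alpha_3z_1^3,$$ equivalently $z_0^2z_3=z_{-1}z_2^2$. *)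

theory Defs
  imports Complex_Main
begin

end

theory Submission
  imports Defs
begin

lemma key:
  fixes a1 a2 a3 a b c d :: real
  assumes a2: "a2 \<le> 0" and a3: "a3 \<le> 0" and a1: "a1 \<le> a2^2 / 4"
    and pa: "a > 0" and pb: "b > 0" and pc: "c > 0" and pd: "d > 0"
    and F: "a^2 * d^2 + a1 * b^2 * c^2 + a2 * a * b * c * d + a3 * (a * c^3 + b^3 * d) = 0"
    and Dd: "2 * a^2 * d + a2 * a * b * c + a3 * b^3 \<ge> 0"
  shows "2 * a * d^2 + a2 * b * c * d + a3 * c^3 \<ge> 0"
proof (rule ccontr)
  assume H: "\<not> ?thesis"
  define p where "p = a * d"
  define q where "q = b * c"
  define u where "u = a3 * a * c^3"
  define t where "t = a3 * b^3 * d"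
  have pp: "p > 0" "q > 0" using pa pb pc pd by (simp_all add: p_def q_def)
  have u0: "u \<le> 0" unfolding u_def using a3 pa pc
    by (simp add: mult_nonpos_nonneg)
  have t0: "t \<le> 0" unfolding t_def using a3 pb pd
    by (simp add: mult_nonpos_nonneg)
  have F': "p^2 + a2 * p * q + a1 * q^2 + u + t = 0"
    using F unfolding p_def q_def u_def t_def by (simp add: algebra_simps power2_eq_square)
  have A: "a * (2 * a * d^2 + a2 * b * c * d + a3 * c^3) = 2 * p^2 + a2 * p * q + u"
    unfolding p_def q_def u_def by (simp add: algebra_simps power2_eq_square)
  have D: "d * (2 * a^2 * d + a2 * a * b * c + a3 * b^3) = 2 * p^2 + a2 * p * q + t"
    unfolding p_def q_def t_def by (simp add: algebra_simps power2_eq_square)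
  have An: "2 * p^2 + a2 * p * q + u < 0"
    using H pa A by (metis mult_pos_neg not_le)
  have Dn: "2 * p^2 + a2 * p * q + t \<ge> 0"
    using Dd pd D by (metis mult_nonneg_nonneg less_imp_le)
  have h1: "p^2 < a1 * q^2" using An F' t0 by linarith
  have h2: "- 2 * p^2 - a2 * p * q \<le> 0" using Dn t0 by linarith
  have h3: "- a2 * q \<le> 2 * p" using h2 pp
    by (smt (verit) mult_le_cancel_left_pos power2_eq_square distrib_left mult.assoc mult.commute)
  have h4: "a2^2 * q^2 \<le> 4 * p^2"
  proof -
    have "(- a2 * q)^2 \<le> (2 * p)^2"
      using h3 a2 pp by (intro power_mono) (auto simp: mult_nonpos_nonneg)
    thus ?thesis by (simp add: power_mult_distrib)
  qed
  have "a1 * q^2 \<le> a2^2 / 4 * q^2" using a1 pp by (simp add: mult_right_mono)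
  thus False using h1 h4 by linarith
qed

theorem theorem6p3:
  fixes \<alpha>1 \<alpha>2 \<alpha>3 :: real and x :: "int \<Rightarrow> real"
  assumes a2: "\<alpha>2 \<le> 0" and a3: "\<alpha>3 \<le> 0" and a1: "\<alpha>1 \<le> \<alpha>2^2 / 4"
    and pos: "\<And>s. x s > 0"
    and eqn: "\<And>v. (x v)^2 * (x (v+3))^2 + \<alpha>1 * (x (v+1))^2 * (x (v+2))^2
                + \<alpha>2 * x v * x (v+1) * x (v+2) * x (v+3)
                + \<alpha>3 * (x v * (x (v+2))^3 + (x (v+1))^3 * x (v+3)) = 0"
    and larger: "\<And>v. x (v+3) =
       (- \<alpha>3 * (x (v+1))^3 - \<alpha>2 * x v * x (v+1) * x (v+2)
        + sqrt (\<alpha>3^2 * (x (v+1))^6 + 2 * \<alpha>2 * \<alpha>3 * x v * (x (v+1))^4 * x (v+2)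
                + (\<alpha>2^2 - 4 * \<alpha>1) * (x v)^2 * (x (v+1))^2 * (x (v+2))^2
                - 4 * \<alpha>3 * (x v)^3 * (x (v+2))^3)) / (2 * (x v)^2)"
  shows "\<forall>v. 2 * (x v)^2 * x (v+3) + \<alpha>2 * x v * x (v+1) * x (v+2) + \<alpha>3 * (x (v+1))^3
           = 2 * x (v-1) * (x (v+2))^2 + \<alpha>2 * x v * x (v+1) * x (v+2) + \<alpha>3 * (x (v+1))^3"
proof
  fix v :: int
  have ge: "2 * (x u)^2 * x (u+3) + \<alpha>2 * x u * x (u+1) * x (u+2) + \<alpha>3 * (x (u+1))^3 \<ge> 0" for u
  proof -
    have "x u > 0" using pos by auto
    hence "2 * (x u)^2 * x (u+3) = - \<alpha>3 * (x (u+1))^3 - \<alpha>2 * x u * x (u+1) * x (u+2)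
        + sqrt (\<alpha>3^2 * (x (u+1))^6 + 2 * \<alpha>2 * \<alpha>3 * x u * (x (u+1))^4 * x (u+2)
                + (\<alpha>2^2 - 4 * \<alpha>1) * (x u)^2 * (x (u+1))^2 * (x (u+2))^2
                - 4 * \<alpha>3 * (x u)^3 * (x (u+2))^3)"
      using larger[of u] by (simp add: field_simps)
    moreover have "\<alpha>3^2 * (x (u+1))^6 + 2 * \<alpha>2 * \<alpha>3 * x u * (x (u+1))^4 * x (u+2)
                + (\<alpha>2^2 - 4 * \<alpha>1) * (x u)^2 * (x (u+1))^2 * (x (u+2))^2
                - 4 * \<alpha>3 * (x u)^3 * (x (u+2))^3
        = (2 * (x u)^2 * x (u+3) + \<alpha>2 * x u * x (u+1) * x (u+2) + \<alpha>3 * (x (u+1))^3)^2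
          - 4 * (x u)^2 * ((x u)^2 * (x (u+3))^2 + \<alpha>1 * (x (u+1))^2 * (x (u+2))^2
                + \<alpha>2 * x u * x (u+1) * x (u+2) * x (u+3)
                + \<alpha>3 * (x u * (x (u+2))^3 + (x (u+1))^3 * x (u+3)))"
      by (simp add: algebra_simps power2_eq_square power3_eq_cube)
         (simp add: power_def algebra_simps numeral_eq_Suc)
    ultimately show ?thesis using eqn[of u] by simp
  qed
  define w where "w = x (v-1)"
  define a where "a = x v"
  define b where "b = x (v+1)"
  define c where "c = x (v+2)"
  define d where "d = x (v+3)"
  have pw: "w > 0" and pa: "a > 0" and pb: "b > 0" and pc: "c > 0" and pd: "d > 0"
    using pos by (simp_all add: w_def a_def b_def c_def d_def)
  have idx: "v - 1 + 1 = v" "v - 1 + 2 = v + 1" "v - 1 + 3 = v + 2" by simp_all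
  have Fw: "w^2 * c^2 + \<alpha>1 * a^2 * b^2 + \<alpha>2 * w * a * b * c + \<alpha>3 * (w * b^3 + a^3 * c) = 0"
    using eqn[of "v-1"] unfolding idx w_def a_def b_def c_def .
  have Gw: "2 * w^2 * c + \<alpha>2 * w * a * b + \<alpha>3 * a^3 \<ge> 0"
    using ge[of "v-1"] unfolding idx w_def a_def b_def c_def .
  have Fw': "w^2 * c^2 + \<alpha>1 * a^2 * b^2 + \<alpha>2 * w * a * b * c + \<alpha>3 * (w * b^3 + a^3 * c) = 0"
    using Fw by (simp add: algebra_simps)
  have Gw': "2 * c^2 * w + \<alpha>2 * b * a * c + \<alpha>3 * b^3 \<ge> 0"
    using key[OF a2 a3 a1 pw pa pb pc Fw' Gw] by (simp add: algebra_simps)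
  have Fd: "a^2 * d^2 + \<alpha>1 * b^2 * c^2 + \<alpha>2 * a * b * c * d + \<alpha>3 * (a * c^3 + b^3 * d) = 0"
    using eqn[of v] unfolding a_def b_def c_def d_def by simp
  have Gd: "2 * a^2 * d + \<alpha>2 * a * b * c + \<alpha>3 * b^3 \<ge> 0"
    using ge[of v] unfolding a_def b_def c_def d_def by simp
  define y where "y = w * c^2 / a^2"
  have wy: "w = y * a^2 / c^2" using pa pc by (simp add: y_def field_simps)
  have Fy: "a^2 * y^2 + \<alpha>1 * b^2 * c^2 + \<alpha>2 * a * b * c * y + \<alpha>3 * (a * c^3 + b^3 * y) = 0"
  proof -
    have "w^2 * c^2 + \<alpha>1 * a^2 * b^2 + \<alpha>2 * w * a * b * c + \<alpha>3 * (w * b^3 + a^3 * c)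
        = (a^2 / c^2) * (a^2 * y^2 + \<alpha>1 * b^2 * c^2 + \<alpha>2 * a * b * c * y + \<alpha>3 * (a * c^3 + b^3 * y))"
      using pa pc unfolding wy by (simp add: field_simps power2_eq_square power3_eq_cube)
    thus ?thesis using Fw' pa pc by simp
  qed
  have Gy: "2 * a^2 * y + \<alpha>2 * a * b * c + \<alpha>3 * b^3 \<ge> 0"
    using Gw' pa by (simp add: y_def field_simps)
  have fac: "(d - y) * (a^2 * (d + y) + \<alpha>2 * a * b * c + \<alpha>3 * b^3) = 0"
    using Fd Fy by (simp add: algebra_simps power2_eq_square)
  have "d = y"
  proof (rule ccontr)
    assume "d \<noteq> y"
    hence "a^2 * (d + y) + \<alpha>2 * a * b * c + \<alpha>3 * b^3 = 0" using fac by simp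
    moreover have "a^2 * (d + y) = a^2 * d + a^2 * y" "2 * a^2 * d = 2 * (a^2 * d)" "2 * a^2 * y = 2 * (a^2 * y)" by (simp_all add: algebra_simps)
    ultimately have "a^2 * d = a^2 * y" using Gd Gy by linarith
    thus False using pa \<open>d \<noteq> y\<close> by simp
  qed
  hence "a^2 * d = w * c^2" using pa by (simp add: y_def)
  thus "2 * (x v)^2 * x (v+3) + \<alpha>2 * x v * x (v+1) * x (v+2) + \<alpha>3 * (x (v+1))^3
           = 2 * x (v-1) * (x (v+2))^2 + \<alpha>2 * x v * x (v+1) * x (v+2) + \<alpha>3 * (x (v+1))^3"
    unfolding w_def a_def b_def c_def d_def by simp
qed

end
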